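(* Let $G$ be a finite undirected graph. Let $K$ be the simplicial complex whose vertices are the nonempty sets $A\subseteq V(G)$ with $N(A)\neq\emptyset$ and $N(N(A))=A$, and whose simplices are the nonempty sets $\{A_1,\dots,A_t\}$ of such vertices with $\bigcap_{i=1}^tA_i\neq\emptyset$ and $N\big(\bigcup_{i=1}^tA_i\big)\neq\emptyset$. Then $K$ collapses onto its subcomplex $\mathcal{L}o(G)$ (the order complex of the vertex set of $K$ ordered by inclusion). (Equivalently, $K$ is the atom crosscut complex of the lattice obtained from the opposite of the face poset of $\mathrm{Hom}(K_2,G)$ by adjoining a minimum and a maximum, with the atom $(A,N(A))$ indexed by $A$.)
   Context: For $S\subseteq V(G)$, $N(S)=\bigcap_{v\in S}N(v)$ is the set of common neighbors of vertices of $S$. The neighborhood complex $\mathcal N(G)$ has simplices the nonempty $S\subseteq V(G)$ with $N(S)\neq\emptyset$; the Lovász complex $\mathcal{L}o(G)$ is the order complex of the poset $\{N(S):S\text{ a simplex of }\mathcal N(G)\}$ ordered by inclusion (this poset equals the vertex set of $K$). $\mathrm{Hom}(K_2,G)$ is the subcomplex of $\Delta^{V(G)}\times\Delta^{V(G)}$ consisting of the cells $\sigma\times\tau$ with $\sigma,\tau$ nonempty subsets of $V(G)$ and $\sigma\times\tau\subseteq E(G)$ (i.e. $(x,y)\in E(G)$ for all $x\in\sigma$, $y\in\tau$). *)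

theory Defs
  imports Main
begin

text \<open>A finite undirected graph: finite vertex set V and a symmetric edge
relation E on V (loops are not excluded).\<close>
definition fin_graph :: "'a set \<Rightarrow> ('a \<Rightarrow> 'a \<Rightarrow> bool) \<Rightarrow> bool" where
  "fin_graph V E \<longleftrightarrow> finite V \<and> (\<forall>x y. E x y \<longrightarrow> x \<in> V \<and> y \<in> V) \<and> (\<forall>x y. E x y \<longrightarrow> E y x)"

definition nbhd :: "'a set \<Rightarrow> ('a \<Rightarrow> 'a \<Rightarrow> bool) \<Rightarrow> 'a set \<Rightarrow> 'a set" where
  "nbhd V E S = {v \<in> V. \<forall>u\<in>S. E u v}"

definition nbhd_complex :: "'a set \<Rightarrow> ('a \<Rightarrow> 'a \<Rightarrow> bool) \<Rightarrow> 'a set set" where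
  "nbhd_complex V E = {S. S \<subseteq> V \<and> S \<noteq> {} \<and> nbhd V E S \<noteq> {}}"

definition lovasz_poset :: "'a set \<Rightarrow> ('a \<Rightarrow> 'a \<Rightarrow> bool) \<Rightarrow> 'a set set" where
  "lovasz_poset V E = nbhd V E ` nbhd_complex V E"

definition order_complex :: "'b set set \<Rightarrow> 'b set set set" where
  "order_complex P = {C. C \<noteq> {} \<and> finite C \<and> C \<subseteq> P \<and>
      (\<forall>A\<in>C. \<forall>B\<in>C. A \<subseteq> B \<or> B \<subseteq> A)}"

definition lovasz_complex :: "'a set \<Rightarrow> ('a \<Rightarrow> 'a \<Rightarrow> bool) \<Rightarrow> 'a set set set" where
  "lovasz_complex V E = order_complex (lovasz_poset V E)"

definition K_vertices :: "'a set \<Rightarrow> ('a \<Rightarrow> 'a \<Rightarrow> bool) \<Rightarrow> 'a set set" where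
  "K_vertices V E = {A. A \<subseteq> V \<and> A \<noteq> {} \<and> nbhd V E A \<noteq> {} \<and> nbhd V E (nbhd V E A) = A}"

definition K_complex :: "'a set \<Rightarrow> ('a \<Rightarrow> 'a \<Rightarrow> bool) \<Rightarrow> 'a set set set" where
  "K_complex V E = {F. F \<noteq> {} \<and> finite F \<and> F \<subseteq> K_vertices V E \<and>
      \<Inter> F \<noteq> {} \<and> nbhd V E (\<Union> F) \<noteq> {}}"

definition elementary_collapse :: "'b set set \<Rightarrow> 'b set set \<Rightarrow> bool" where
  "elementary_collapse K K' \<longleftrightarrow> (\<exists>\<sigma> \<tau>. \<sigma> \<in> K \<and> \<tau> \<in> K \<and> \<sigma> \<subset> \<tau> \<and> finite \<tau> \<and>
      card \<tau> = card \<sigma> + 1 \<and> (\<forall>\<rho>\<in>K. \<sigma> \<subseteq> \<rho> \<longrightarrow> \<rho> = \<sigma> \<or> \<rho> = \<tau>) \<and>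
      K' = K - {\<sigma>, \<tau>})"

definition collapses_onto :: "'b set set \<Rightarrow> 'b set set \<Rightarrow> bool" where
  "collapses_onto K L \<longleftrightarrow> elementary_collapse\<^sup>*\<^sup>* K L"

end

theory Submission
  imports Defs
begin

definition incp :: "'b set set \<Rightarrow> 'b set set" where
  "incp F = {A\<in>F. \<exists>B\<in>F. \<not> A \<subseteq> B \<and> \<not> B \<subseteq> A}"

definition ms :: "'b set set \<Rightarrow> 'b set" where
  "ms F = \<Inter>(incp F)"

lemma incp_sub: "incp F \<subseteq> F" unfolding incp_def by auto

lemma ms_comp:
  assumes "incp F \<noteq> {}" "y \<in> F"
  shows "ms F \<subseteq> y \<or> y \<subseteq> ms F"
proof (cases "y \<in> incp F")
  case True then show ?thesis unfolding ms_def by auto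
next
  case False
  then have c: "\<forall>B\<in>F. B \<subseteq> y \<or> y \<subseteq> B" using assms unfolding incp_def by auto
  show ?thesis
  proof (cases "\<forall>z\<in>incp F. y \<subseteq> z")
    case True then show ?thesis unfolding ms_def by auto
  next
    case False
    then obtain z where "z \<in> incp F" "\<not> y \<subseteq> z" by auto
    then have "z \<subseteq> y" using c incp_sub by blast
    moreover have "ms F \<subseteq> z" using \<open>z \<in> incp F\<close> unfolding ms_def by auto
    ultimately show ?thesis by auto
  qed
qed

lemma incp_insert:
  assumes "incp F \<noteq> {}"
  shows "incp (insert (ms F) F) = incp F"
proof -
  have "\<forall>y\<in>F. ms F \<subseteq> y \<or> y \<subseteq> ms F" using ms_comp[OF assms] by blast
  then show ?thesis unfolding incp_def by auto
qed

lemma incp_remove: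
  assumes "incp F \<noteq> {}"
  shows "incp (F - {ms F}) = incp F"
proof -
  have "\<forall>y\<in>F. ms F \<subseteq> y \<or> y \<subseteq> ms F" using ms_comp[OF assms] by blast
  then show ?thesis unfolding incp_def by auto
qed

lemma incp_mono: "F \<subseteq> G \<Longrightarrow> incp F \<subseteq> incp G"
  unfolding incp_def by blast

lemma ms_anti: "F \<subseteq> G \<Longrightarrow> ms G \<subseteq> ms F"
  unfolding ms_def using incp_mono by (metis Inter_anti_mono)

lemma cone_collapse:
  assumes "finite D" "\<forall>F\<in>D. x \<notin> F \<and> finite F"
    "K = K' \<union> D \<union> insert x ` D" "K' \<inter> (D \<union> insert x ` D) = {}"
    "\<forall>\<rho>\<in>K'. \<forall>F\<in>D. \<not> F \<subseteq> \<rho>"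
  shows "elementary_collapse\<^sup>*\<^sup>* K K'"
  using assms
proof (induction "card D" arbitrary: D K)
  case 0
  then show ?case by auto
next
  case (Suc n)
  then have "D \<noteq> {}" by auto
  have "Max (card ` D) \<in> card ` D" using Suc.prems(1) \<open>D \<noteq> {}\<close> by (intro Max_in) auto
  then obtain F where F: "F \<in> D" "card F = Max (card ` D)" by auto
  have maxc: "\<forall>G\<in>D. card G \<le> card F" using F Suc.prems(1) by auto
  have xF: "x \<notin> F" "finite F" using F Suc.prems(2) by auto
  define D' where "D' = D - {F}"
  define K1 where "K1 = K - {F, insert x F}"
  have ec: "elementary_collapse K K1"
    unfolding elementary_collapse_def
  proof (intro exI conjI)
    show "F \<in> K" using F Suc.prems(3) by auto
    show "insert x F \<in> K" using F Suc.prems(3) by auto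
    show "F \<subset> insert x F" using xF by auto
    show "finite (insert x F)" using xF by auto
    show "card (insert x F) = card F + 1" using xF by auto
    show "K1 = K - {F, insert x F}" by (simp add: K1_def)
    show "\<forall>\<rho>\<in>K. F \<subseteq> \<rho> \<longrightarrow> \<rho> = F \<or> \<rho> = insert x F"
    proof (intro ballI impI)
      fix \<rho> assume r: "\<rho> \<in> K" "F \<subseteq> \<rho>"
      have "\<rho> \<in> K' \<or> \<rho> \<in> D \<or> (\<exists>G\<in>D. \<rho> = insert x G)" using r Suc.prems(3) by auto
      moreover {
        assume "\<rho> \<in> K'" then have False using r F Suc.prems(5) by auto }
      moreover {
        assume "\<rho> \<in> D"
        then have "finite \<rho>" "card \<rho> \<le> card F" using maxc Suc.prems(2) by auto
        then have "\<rho> = F" using r by (metis card_seteq)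
      }
      moreover {
        fix G assume G: "G \<in> D" "\<rho> = insert x G"
        then have "F \<subseteq> G" using r xF by auto
        moreover have "finite G" "card G \<le> card F" using G maxc Suc.prems(2) by auto
        ultimately have "G = F" by (metis card_seteq)
        then have "\<rho> = insert x F" using G by simp
      }
      ultimately show "\<rho> = F \<or> \<rho> = insert x F" by blast
    qed
  qed
  have inj: "\<And>G H. G \<in> D \<Longrightarrow> H \<in> D \<Longrightarrow> insert x G = insert x H \<Longrightarrow> G = H"
    using Suc.prems(2) by (metis insert_ident)
  have K1eq: "K1 = K' \<union> D' \<union> insert x ` D'"
  proof
    show "K1 \<subseteq> K' \<union> D' \<union> insert x ` D'"
    proof
      fix \<rho> assume "\<rho> \<in> K1"
      then have r: "\<rho> \<in> K" "\<rho> \<noteq> F" "\<rho> \<noteq> insert x F" unfolding K1_def by auto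
      then have "\<rho> \<in> K' \<or> \<rho> \<in> D \<or> (\<exists>G\<in>D. \<rho> = insert x G)" using Suc.prems(3) by auto
      then show "\<rho> \<in> K' \<union> D' \<union> insert x ` D'" using r unfolding D'_def by auto
    qed
  next
    show "K' \<union> D' \<union> insert x ` D' \<subseteq> K1"
    proof
      fix \<rho> assume r: "\<rho> \<in> K' \<union> D' \<union> insert x ` D'"
      have "\<rho> \<in> K" using r Suc.prems(3) unfolding D'_def by auto
      moreover have "\<rho> \<noteq> F"
      proof
        assume "\<rho> = F"
        then show False using r Suc.prems(2,4) F unfolding D'_def by auto
      qed
      moreover have "\<rho> \<noteq> insert x F"
      proof
        assume e: "\<rho> = insert x F"
        show False
        proof -
          have "insert x F \<notin> K'" using Suc.prems(4) F by auto
          moreover have "insert x F \<notin> D" using Suc.prems(2) by auto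
          moreover have "insert x F \<notin> insert x ` D'"
            using inj F unfolding D'_def by auto
          ultimately show False using r e by auto
        qed
      qed
      ultimately show "\<rho> \<in> K1" unfolding K1_def by auto
    qed
  qed
  have "elementary_collapse\<^sup>*\<^sup>* K1 K'"
  proof (rule Suc.hyps(1))
    show "n = card D'" using Suc.hyps(2) F Suc.prems(1) unfolding D'_def by auto
    show "finite D'" using Suc.prems(1) unfolding D'_def by auto
    show "\<forall>F\<in>D'. x \<notin> F \<and> finite F" using Suc.prems(2) unfolding D'_def by auto
    show "K1 = K' \<union> D' \<union> insert x ` D'" by (rule K1eq)
    show "K' \<inter> (D' \<union> insert x ` D') = {}" using Suc.prems(4) unfolding D'_def by auto
    show "\<forall>\<rho>\<in>K'. \<forall>F\<in>D'. \<not> F \<subseteq> \<rho>" using Suc.prems(5) unfolding D'_def by auto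
  qed
  then show ?case using ec by (meson converse_rtranclp_into_rtranclp)
qed

lemma generic_collapse:
  assumes finK: "finite K" and finE: "\<forall>F\<in>K. finite F"
    and P1: "\<forall>F\<in>K. incp F \<noteq> {} \<longrightarrow> insert (ms F) F \<in> K"
    and P2: "\<forall>F\<in>K. incp F \<noteq> {} \<longrightarrow> ms F \<in> F \<longrightarrow> F - {ms F} \<in> K"
    and finW: "finite W"
    and up: "\<forall>y\<in>W. \<forall>z\<in>ms ` {F\<in>K. incp F \<noteq> {}}. y \<subseteq> z \<longrightarrow> z \<in> W"
  shows "elementary_collapse\<^sup>*\<^sup>* {F\<in>K. incp F = {} \<or> ms F \<in> W} {F\<in>K. incp F = {}}"
  using finW up
proof (induction W rule: finite_psubset_induct)
  case (psubset W)
  define M where "M = ms ` {F\<in>K. incp F \<noteq> {}}"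
  show ?case
  proof (cases "W = {}")
    case True then show ?thesis by simp
  next
    case False
    obtain x where x: "x \<in> W" "\<forall>b\<in>W. b \<subseteq> x \<longrightarrow> x = b"
      using finite_has_minimal[OF psubset.hyps(1) False] by auto
    define W' where "W' = W - {x}"
    have upW': "\<forall>y\<in>W'. \<forall>z\<in>M. y \<subseteq> z \<longrightarrow> z \<in> W'"
    proof (intro ballI impI)
      fix y z assume yz: "y \<in> W'" "z \<in> M" "y \<subseteq> z"
      then have "z \<in> W" using psubset.prems unfolding W'_def M_def by auto
      moreover have "z \<noteq> x" using yz x unfolding W'_def by auto
      ultimately show "z \<in> W'" unfolding W'_def by auto
    qed
    have IH: "elementary_collapse\<^sup>*\<^sup>* {F\<in>K. incp F = {} \<or> ms F \<in> W'} {F\<in>K. incp F = {}}"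
      using psubset.IH[of W'] upW' x unfolding W'_def M_def by auto
    define D where "D = {F\<in>K. incp F \<noteq> {} \<and> ms F = x \<and> x \<notin> F}"
    have step: "elementary_collapse\<^sup>*\<^sup>* {F\<in>K. incp F = {} \<or> ms F \<in> W} {F\<in>K. incp F = {} \<or> ms F \<in> W'}"
    proof (rule cone_collapse[where D = D and x = x])
      show "finite D" using finK unfolding D_def by auto
      show "\<forall>F\<in>D. x \<notin> F \<and> finite F" using finE unfolding D_def by auto
      show "{F \<in> K. incp F = {} \<or> ms F \<in> W} =
         {F \<in> K. incp F = {} \<or> ms F \<in> W'} \<union> D \<union> insert x ` D"
      proof
        show "{F \<in> K. incp F = {} \<or> ms F \<in> W} \<subseteq>
         {F \<in> K. incp F = {} \<or> ms F \<in> W'} \<union> D \<union> insert x ` D"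
        proof
          fix F assume F: "F \<in> {F \<in> K. incp F = {} \<or> ms F \<in> W}"
          show "F \<in> {F \<in> K. incp F = {} \<or> ms F \<in> W'} \<union> D \<union> insert x ` D"
          proof (cases "incp F = {} \<or> ms F \<in> W'")
            case True then show ?thesis using F by auto
          next
            case False
            then have a: "incp F \<noteq> {}" "ms F = x" "F \<in> K" using F unfolding W'_def by auto
            show ?thesis
            proof (cases "x \<in> F")
              case False then show ?thesis using a unfolding D_def by auto
            next
              case True
              have i: "incp (F - {x}) = incp F" using incp_remove[OF a(1)] a by simp
              have "F - {x} \<in> D" unfolding D_def ms_def
                using i a P2 True by (auto simp: ms_def)
              moreover have "F = insert x (F - {x})" using True by auto
              ultimately show ?thesis by blast
            qed
          qed
        qed
      next
        show "{F \<in> K. incp F = {} \<or> ms F \<in> W'} \<union> D \<union> insert x ` D \<subseteq>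
          {F \<in> K. incp F = {} \<or> ms F \<in> W}"
        proof
          fix F assume "F \<in> {F \<in> K. incp F = {} \<or> ms F \<in> W'} \<union> D \<union> insert x ` D"
          moreover {
            fix G assume G: "G \<in> D" "F = insert x G"
            then have a: "G \<in> K" "incp G \<noteq> {}" "ms G = x" unfolding D_def by auto
            have i: "incp F = incp G" using incp_insert[OF a(2)] a G by simp
            have "F \<in> K" using P1 a G by auto
            then have "F \<in> {F \<in> K. incp F = {} \<or> ms F \<in> W}" using i a x by (simp add: ms_def)
          }
          ultimately show "F \<in> {F \<in> K. incp F = {} \<or> ms F \<in> W}"
            using x unfolding W'_def D_def by blast
        qed
      qed
      show "{F \<in> K. incp F = {} \<or> ms F \<in> W'} \<inter> (D \<union> insert x ` D) = {}"
      proof -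
        {
          fix G assume G: "G \<in> D"
          then have a: "incp G \<noteq> {}" "ms G = x" unfolding D_def by auto
          have "incp (insert x G) = incp G" using incp_insert[OF a(1)] a by simp
          then have "incp (insert x G) \<noteq> {} \<and> ms (insert x G) = x" using a by (simp add: ms_def)
        }
        then show ?thesis unfolding D_def W'_def by auto
      qed
      show "\<forall>\<rho>\<in>{F \<in> K. incp F = {} \<or> ms F \<in> W'}. \<forall>F\<in>D. \<not> F \<subseteq> \<rho>"
      proof (intro ballI notI)
        fix \<rho> F assume r: "\<rho> \<in> {F \<in> K. incp F = {} \<or> ms F \<in> W'}" and F: "F \<in> D" and s: "F \<subseteq> \<rho>"
        have a: "incp F \<noteq> {}" "ms F = x" "F \<in> K" using F unfolding D_def by auto
        have "incp \<rho> \<noteq> {}" using incp_mono[OF s] a by auto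
        then have "ms \<rho> \<in> W'" using r by auto
        moreover have "ms \<rho> \<subseteq> x" using ms_anti[OF s] a by simp
        moreover have "x \<in> M" using a unfolding M_def by auto
        ultimately have "x \<in> W'" using upW' by blast
        then show False unfolding W'_def by simp
      qed
    qed
    show ?thesis using step IH by (rule rtranclp_trans)
  qed
qed

lemma nb_anti: "S \<subseteq> T \<Longrightarrow> nbhd V E T \<subseteq> nbhd V E S"
  unfolding nbhd_def by auto

lemma nb_sub: "nbhd V E S \<subseteq> V"
  unfolding nbhd_def by auto

lemma nb_ext: "fin_graph V E \<Longrightarrow> S \<subseteq> V \<Longrightarrow> S \<subseteq> nbhd V E (nbhd V E S)"
  unfolding fin_graph_def nbhd_def by auto

lemma nb_triple: "fin_graph V E \<Longrightarrow> S \<subseteq> V \<Longrightarrow> nbhd V E (nbhd V E (nbhd V E S)) = nbhd V E S"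
  by (meson nb_anti nb_ext nb_sub subset_antisym)

lemma poset_eq:
  assumes "fin_graph V E"
  shows "lovasz_poset V E = K_vertices V E"
proof
  show "lovasz_poset V E \<subseteq> K_vertices V E"
  proof
    fix A assume "A \<in> lovasz_poset V E"
    then obtain S where S: "S \<subseteq> V" "S \<noteq> {}" "nbhd V E S \<noteq> {}" "A = nbhd V E S"
      unfolding lovasz_poset_def nbhd_complex_def by auto
    have "S \<subseteq> nbhd V E A" using nb_ext[OF assms S(1)] S by simp
    then show "A \<in> K_vertices V E" unfolding K_vertices_def
      using S nb_sub[of V E S] nb_triple[OF assms S(1)] by auto
  qed
next
  show "K_vertices V E \<subseteq> lovasz_poset V E"
  proof
    fix A assume A: "A \<in> K_vertices V E"
    then have "nbhd V E A \<in> nbhd_complex V E" unfolding K_vertices_def nbhd_complex_def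
      using nb_sub[of V E A] by auto
    moreover have "A = nbhd V E (nbhd V E A)" using A unfolding K_vertices_def by auto
    ultimately show "A \<in> lovasz_poset V E" unfolding lovasz_poset_def by auto
  qed
qed

lemma ms_vertex:
  assumes g: "fin_graph V E" and F: "F \<in> K_complex V E" and i: "incp F \<noteq> {}"
  shows "ms F \<in> K_vertices V E"
proof -
  have FK: "F \<subseteq> K_vertices V E" "\<Inter>F \<noteq> {}" using F unfolding K_complex_def by auto
  obtain A where A: "A \<in> incp F" using i by auto
  have AF: "A \<in> F" using A incp_sub by auto
  have mA: "ms F \<subseteq> A" using A unfolding ms_def by auto
  have Av: "A \<subseteq> V" "nbhd V E A \<noteq> {}" using AF FK unfolding K_vertices_def by auto
  have "\<Inter>F \<subseteq> ms F" unfolding ms_def using incp_sub by (metis Inter_anti_mono)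
  then have ne: "ms F \<noteq> {}" using FK by auto
  have nn: "nbhd V E (ms F) \<noteq> {}" using nb_anti[OF mA, of V E] Av by auto
  have sv: "ms F \<subseteq> V" using mA Av by auto
  have "nbhd V E (nbhd V E (ms F)) \<subseteq> ms F"
    unfolding ms_def
  proof (rule Inter_greatest)
    fix B assume B: "B \<in> incp F"
    then have "ms F \<subseteq> B" unfolding ms_def by auto
    then have "nbhd V E (nbhd V E (ms F)) \<subseteq> nbhd V E (nbhd V E B)" by (intro nb_anti)
    moreover have "nbhd V E (nbhd V E B) = B" using B incp_sub FK unfolding K_vertices_def by blast
    ultimately show "nbhd V E (nbhd V E (\<Inter> (incp F))) \<subseteq> B" unfolding ms_def by simp
  qed
  then have "nbhd V E (nbhd V E (ms F)) = ms F" using nb_ext[OF g sv] by auto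
  then show ?thesis unfolding K_vertices_def using ne nn sv by auto
qed

lemma L_eq:
  assumes g: "fin_graph V E"
  shows "{F\<in>K_complex V E. incp F = {}} = lovasz_complex V E"
proof
  show "{F\<in>K_complex V E. incp F = {}} \<subseteq> lovasz_complex V E"
    unfolding lovasz_complex_def poset_eq[OF g] order_complex_def K_complex_def incp_def
    by blast
next
  show "lovasz_complex V E \<subseteq> {F\<in>K_complex V E. incp F = {}}"
  proof
    fix C assume "C \<in> lovasz_complex V E"
    then have C: "C \<noteq> {}" "finite C" "C \<subseteq> K_vertices V E" "\<forall>A\<in>C. \<forall>B\<in>C. A \<subseteq> B \<or> B \<subseteq> A"
      unfolding lovasz_complex_def poset_eq[OF g] order_complex_def by auto
    have ch: "subset.chain UNIV C" using C(4) by (simp add: subset_chain_def)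
    have "\<Inter>C \<in> C" by (rule Inter_in_chain[OF C(2) C(1) ch])
    then have "\<Inter>C \<noteq> {}" using C(3) unfolding K_vertices_def by auto
    moreover have "\<Union>C \<in> C" by (rule Union_in_chain[OF C(2) C(1) ch])
    then have "nbhd V E (\<Union>C) \<noteq> {}" using C(3) unfolding K_vertices_def by auto
    moreover have "incp C = {}" using C(4) unfolding incp_def by auto
    ultimately show "C \<in> {F\<in>K_complex V E. incp F = {}}" using C unfolding K_complex_def by auto
  qed
qed

theorem mainTheorem7:
  fixes V :: "'a set" and E :: "'a \<Rightarrow> 'a \<Rightarrow> bool"
  assumes "fin_graph V E"
  shows "collapses_onto (K_complex V E) (lovasz_complex V E)"
proof -
  let ?K = "K_complex V E"
  have fV: "finite V" using assms unfolding fin_graph_def by auto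
  have "?K \<subseteq> Pow (Pow V)" unfolding K_complex_def K_vertices_def by auto
  then have finK: "finite ?K" using fV by (meson finite_Pow_iff finite_subset)
  have finE: "\<forall>F\<in>?K. finite F" unfolding K_complex_def by auto
  have P1: "\<forall>F\<in>?K. incp F \<noteq> {} \<longrightarrow> insert (ms F) F \<in> ?K"
  proof (intro ballI impI)
    fix F assume F: "F \<in> ?K" and i: "incp F \<noteq> {}"
    have mv: "ms F \<in> K_vertices V E" by (rule ms_vertex[OF assms F i])
    obtain A where A: "A \<in> incp F" using i by auto
    have AF: "A \<in> F" using A incp_sub by auto
    have mA: "ms F \<subseteq> A" using A unfolding ms_def by auto
    have "\<Inter>F \<subseteq> ms F" unfolding ms_def using incp_sub by (metis Inter_anti_mono)
    then have "\<Inter>(insert (ms F) F) = \<Inter>F" by auto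
    moreover have "\<Union>(insert (ms F) F) = \<Union>F" using mA AF by auto
    ultimately show "insert (ms F) F \<in> ?K" using F mv unfolding K_complex_def by auto
  qed
  have P2: "\<forall>F\<in>?K. incp F \<noteq> {} \<longrightarrow> ms F \<in> F \<longrightarrow> F - {ms F} \<in> ?K"
  proof (intro ballI impI)
    fix F assume F: "F \<in> ?K" and i: "incp F \<noteq> {}" and m: "ms F \<in> F"
    have "incp (F - {ms F}) \<noteq> {}" using incp_remove[OF i] i by simp
    then have ne: "F - {ms F} \<noteq> {}" using incp_sub by blast
    have "\<Inter>F \<subseteq> \<Inter>(F - {ms F})" by auto
    moreover have "nbhd V E (\<Union>F) \<subseteq> nbhd V E (\<Union>(F - {ms F}))" by (intro nb_anti) auto
    ultimately show "F - {ms F} \<in> ?K" using F ne unfolding K_complex_def by auto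
  qed
  define M where "M = ms ` {F\<in>?K. incp F \<noteq> {}}"
  have "elementary_collapse\<^sup>*\<^sup>* {F\<in>?K. incp F = {} \<or> ms F \<in> M} {F\<in>?K. incp F = {}}"
    by (rule generic_collapse[OF finK finE P1 P2]) (auto simp: M_def finK)
  moreover have "{F\<in>?K. incp F = {} \<or> ms F \<in> M} = ?K" unfolding M_def by auto
  ultimately show ?thesis unfolding collapses_onto_def L_eq[OF assms] by simp
qed

end
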